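(* Let $\mathbb F$ be a field of characteristic $p$, $S$ a quasi-thin scheme on $X$, $x\in X$, $\mathcal T=\mathcal T(x)$, $E_a^*=E_a^*(x)$. The following are equivalent: (i) $S$ is $p'$-valenced; (ii) $\mathcal T$ is semisimple; (iii) for every $R_a\in S$ the $\mathbb F$-algebra $E_a^*\mathcal TE_a^*=\{E_a^*ME_a^*:M\in\mathcal T\}$ (with identity $E_a^*$) is semisimple.
   Context: Let $X$ be a nonempty finite set. A scheme of class $d$ on $X$ is a partition $S=\{R_0,\dots,R_d\}$ of $X\times X$ into nonempty sets such that $R_0=\{(b,b):b\in X\}$; for each $c$ there is $c'$ with $R_{c'}=\{(f,e):(e,f)\in R_c\}$; and for all $i,j,k$ the intersection number $p_{ij}^k=|\{\ell\in X:(m,\ell)\in R_i,(\ell,n)\in R_j\}|$ does not depend on $(m,n)\in R_k$. The valency is $k_a=p_{aa'}^0$; quasi-thin means all $k_a\le 2$; $p'$-valenced means no $k_a$ is divisible by $p$ (every scheme is $0'$-valenced). For $y\in X$, $yR_a=\{z:(y,z)\in R_a\}$; $A_a\in M_X(\mathbb F)$ is the $(0,1)$ adjacency matrix of $R_a$, $E_a^*(y)$ is the diagonal $(0,1)$-matrix with ones exactly at positions indexed by $yR_a$, and $\mathcal T(y)$ is the $\mathbb F$-subalgebra of $M_X(\mathbb F)$ generated by $A_0,\dots,A_d,E_0^*(y),\dots,E_d^*(y)$. *)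

theory Defs
  imports "HOL-Analysis.Analysis"
begin

text \<open>Schemes on a finite nonempty type 'x (the set X), with relations R 0, ..., R d.\<close>

definition intersection_count ::
  "(nat \<Rightarrow> ('x \<times> 'x) set) \<Rightarrow> nat \<Rightarrow> nat \<Rightarrow> 'x \<Rightarrow> 'x \<Rightarrow> nat" where
  "intersection_count R i j m n = card {l. (m, l) \<in> R i \<and> (l, n) \<in> R j}"

definition is_scheme :: "nat \<Rightarrow> (nat \<Rightarrow> ('x::finite \<times> 'x) set) \<Rightarrow> bool" where
  "is_scheme d R \<longleftrightarrow>
     (\<forall>i\<le>d. R i \<noteq> {}) \<and>
     (\<forall>i\<le>d. \<forall>j\<le>d. i \<noteq> j \<longrightarrow> R i \<inter> R j = {}) \<and>
     (\<Union>i\<le>d. R i) = UNIV \<and>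
     R 0 = Id \<and>
     (\<forall>c\<le>d. \<exists>c'\<le>d. R c' = converse (R c)) \<and>
     (\<forall>i\<le>d. \<forall>j\<le>d. \<forall>k\<le>d. \<forall>m n m' n'. (m, n) \<in> R k \<longrightarrow> (m', n') \<in> R k \<longrightarrow>
        intersection_count R i j m n = intersection_count R i j m' n')"

definition intersection_number :: "(nat \<Rightarrow> ('x \<times> 'x) set) \<Rightarrow> nat \<Rightarrow> nat \<Rightarrow> nat \<Rightarrow> nat" where
  "intersection_number R i j k =
     (let mn = (SOME mn. mn \<in> R k) in intersection_count R i j (fst mn) (snd mn))"

definition dual_index :: "nat \<Rightarrow> (nat \<Rightarrow> ('x \<times> 'x) set) \<Rightarrow> nat \<Rightarrow> nat" where
  "dual_index d R c = (THE c'. c' \<le> d \<and> R c' = converse (R c))"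

definition valency :: "nat \<Rightarrow> (nat \<Rightarrow> ('x \<times> 'x) set) \<Rightarrow> nat \<Rightarrow> nat" where
  "valency d R a = intersection_number R a (dual_index d R a) 0"

definition quasi_thin :: "nat \<Rightarrow> (nat \<Rightarrow> ('x \<times> 'x) set) \<Rightarrow> bool" where
  "quasi_thin d R \<longleftrightarrow> (\<forall>a\<le>d. valency d R a \<le> 2)"

text \<open>p'-valenced; for p = 0 this is always true since valencies are positive.\<close>
definition p'_valenced :: "nat \<Rightarrow> nat \<Rightarrow> (nat \<Rightarrow> ('x \<times> 'x) set) \<Rightarrow> bool" where
  "p'_valenced p d R \<longleftrightarrow> (\<forall>a\<le>d. \<not> p dvd valency d R a)"

definition adj_matrix :: "(nat \<Rightarrow> ('x::finite \<times> 'x) set) \<Rightarrow> nat \<Rightarrow> 'f::field ^'x^'x" where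
  "adj_matrix R a = (\<chi> i j. if (i, j) \<in> R a then 1 else 0)"

definition dual_idem :: "(nat \<Rightarrow> ('x::finite \<times> 'x) set) \<Rightarrow> 'x \<Rightarrow> nat \<Rightarrow> 'f::field ^'x^'x" where
  "dual_idem R y a = (\<chi> i j. if i = j \<and> (y, i) \<in> R a then 1 else 0)"

definition mat_smult :: "'f::field \<Rightarrow> 'f^'x^'x \<Rightarrow> 'f^'x^'x" where
  "mat_smult c M = (\<chi> i j. c * M $ i $ j)"

inductive_set gen_subalg :: "('f::field ^'x::finite^'x) set \<Rightarrow> ('f^'x^'x) set"
  for G where
  gen: "M \<in> G \<Longrightarrow> M \<in> gen_subalg G"
| one: "mat 1 \<in> gen_subalg G"
| add: "M \<in> gen_subalg G \<Longrightarrow> N \<in> gen_subalg G \<Longrightarrow> M + N \<in> gen_subalg G"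
| smult: "M \<in> gen_subalg G \<Longrightarrow> mat_smult c M \<in> gen_subalg G"
| mult: "M \<in> gen_subalg G \<Longrightarrow> N \<in> gen_subalg G \<Longrightarrow> M ** N \<in> gen_subalg G"

definition terwilliger_alg :: "nat \<Rightarrow> (nat \<Rightarrow> ('x::finite \<times> 'x) set) \<Rightarrow> 'x \<Rightarrow> ('f::field ^'x^'x) set" where
  "terwilliger_alg d R y =
     gen_subalg ((\<lambda>a. adj_matrix R a) ` {0..d} \<union> (\<lambda>a. dual_idem R y a) ` {0..d})"

text \<open>A (not necessarily unit-preserving) F-subalgebra A of M_X(F) with identity element e.\<close>
definition unital_alg :: "('f::field ^'x::finite^'x) set \<Rightarrow> 'f^'x^'x \<Rightarrow> bool" where
  "unital_alg A e \<longleftrightarrow> e \<in> A \<and> 0 \<in> A \<and>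
     (\<forall>M\<in>A. \<forall>N\<in>A. M + N \<in> A \<and> M ** N \<in> A) \<and>
     (\<forall>c. \<forall>M\<in>A. mat_smult c M \<in> A) \<and>
     (\<forall>M\<in>A. e ** M = M \<and> M ** e = M)"

definition left_ideal :: "('f::field ^'x::finite^'x) set \<Rightarrow> ('f^'x^'x) set \<Rightarrow> bool" where
  "left_ideal A L \<longleftrightarrow> L \<subseteq> A \<and> 0 \<in> L \<and>
     (\<forall>M\<in>L. \<forall>N\<in>L. M + N \<in> L) \<and> (\<forall>M\<in>L. - M \<in> L) \<and>
     (\<forall>a\<in>A. \<forall>M\<in>L. a ** M \<in> L)"

definition maximal_left_ideal :: "('f::field ^'x::finite^'x) set \<Rightarrow> ('f^'x^'x) set \<Rightarrow> bool" where
  "maximal_left_ideal A L \<longleftrightarrow> left_ideal A L \<and> L \<noteq> A \<and>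
     (\<forall>L'. left_ideal A L' \<and> L \<subseteq> L' \<and> L' \<noteq> A \<longrightarrow> L' = L)"

definition jacobson_radical :: "('f::field ^'x::finite^'x) set \<Rightarrow> ('f^'x^'x) set" where
  "jacobson_radical A = A \<inter> \<Inter> {L. maximal_left_ideal A L}"

definition semisimple_alg :: "('f::field ^'x::finite^'x) set \<Rightarrow> 'f^'x^'x \<Rightarrow> bool" where
  "semisimple_alg A e \<longleftrightarrow> unital_alg A e \<and> jacobson_radical A = {0}"

end

theory Submission
  imports Defs
begin


lemma mat_smult_mv: "mat_smult c M *v v = c *s (M *v v)"
  by (simp add: mat_smult_def matrix_vector_mult_def vec_eq_iff sum_distrib_left mult.assoc)

lemma mat_smult_neg1: "mat_smult (-1) M = - M"
  by (simp add: mat_smult_def vec_eq_iff)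

lemma mat_smult_mult_left: "mat_smult c M ** N = mat_smult c (M ** N)"
  by (simp add: mat_smult_def matrix_matrix_mult_def vec_eq_iff sum_distrib_left mult.assoc)

lemma mat_smult_mult_right: "M ** mat_smult c N = mat_smult c (M ** N)"
  by (simp add: mat_smult_def matrix_matrix_mult_def vec_eq_iff sum_distrib_left mult_ac)

lemma mat_smult_0: "mat_smult 0 M = 0"
  by (simp add: mat_smult_def vec_eq_iff)

lemma matrix_add_rdistrib': "(B + C) ** A = B ** A + C ** A"
  by (simp add: matrix_matrix_mult_def vec_eq_iff sum.distrib distrib_right)

lemma matrix_neg_left: "(- B) ** (A::'a::comm_ring_1^'n^'n) = - (B ** A)"
  by (simp add: matrix_matrix_mult_def vec_eq_iff sum_negf)

lemma matrix_neg_right: "(A::'a::comm_ring_1^'n^'n) ** (- B) = - (A ** B)"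
  by (simp add: matrix_matrix_mult_def vec_eq_iff sum_negf)

lemma mv_add_left: "(B + C) *v v = B *v v + C *v v"
  by (simp add: matrix_vector_mult_def vec_eq_iff sum.distrib distrib_right)

lemma mv_zero_left: "0 *v v = 0"
  by (simp add: matrix_vector_mult_def vec_eq_iff)

lemma mv_add_right: "B *v (v + w) = B *v v + B *v w"
  by (simp add: matrix_vector_mult_def vec_eq_iff sum.distrib distrib_left)

lemma mv_smult_right: "B *v (c *s v) = c *s (B *v (v::'a::comm_ring_1^'n))"
  by (simp add: matrix_vector_mult_def vec_eq_iff sum_distrib_left mult_ac)

lemma nil_in_radical:
  fixes A :: "('f::field^'x::finite^'x) set"
  assumes ua: "unital_alg A e" and nA: "n \<in> A"
    and nil: "\<forall>a\<in>A. (a ** n) ** (a ** n) = 0"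
  shows "n \<in> jacobson_radical A"
proof -
  have eA: "e \<in> A" and zA: "0 \<in> A" and cl: "\<And>M N. M\<in>A \<Longrightarrow> N\<in>A \<Longrightarrow> M + N \<in> A \<and> M ** N \<in> A"
    and sm: "\<And>c M. M\<in>A \<Longrightarrow> mat_smult c M \<in> A"
    and idl: "\<And>M. M\<in>A \<Longrightarrow> e ** M = M" and idr: "\<And>M. M\<in>A \<Longrightarrow> M ** e = M"
    using ua unfolding unital_alg_def by auto
  have negA: "\<And>M. M \<in> A \<Longrightarrow> - M \<in> A" using sm mat_smult_neg1 by metis
  have "n \<in> L" if mL: "maximal_left_ideal A L" for L
  proof (rule ccontr)
    assume nL: "n \<notin> L"
    have li: "left_ideal A L" and LA: "L \<noteq> A"
      and mx: "\<And>L'. left_ideal A L' \<Longrightarrow> L \<subseteq> L' \<Longrightarrow> L' \<noteq> A \<Longrightarrow> L' = L"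
      using mL unfolding maximal_left_ideal_def by auto
    have LsA: "L \<subseteq> A" and z: "0 \<in> L" and ad: "\<And>M N. M\<in>L \<Longrightarrow> N\<in>L \<Longrightarrow> M + N \<in> L"
      and ng: "\<And>M. M\<in>L \<Longrightarrow> - M \<in> L" and lm: "\<And>a M. a\<in>A \<Longrightarrow> M\<in>L \<Longrightarrow> a ** M \<in> L"
      using li unfolding left_ideal_def by auto
    define L' where "L' = {l + a ** n | l a. l \<in> L \<and> a \<in> A}"
    have "left_ideal A L'"
      unfolding left_ideal_def
    proof (intro conjI ballI)
      show "L' \<subseteq> A" using LsA cl nA unfolding L'_def by blast
      show "0 \<in> L'" unfolding L'_def using z zA by force
      fix M N assume "M \<in> L'" "N \<in> L'"
      then obtain l1 a1 l2 a2 where "M = l1 + a1 ** n" "N = l2 + a2 ** n" "l1 \<in> L" "l2 \<in> L" "a1 \<in> A" "a2 \<in> A"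
        unfolding L'_def by blast
      then show "M + N \<in> L'" unfolding L'_def
        by (intro CollectI exI[of _ "l1 + l2"] exI[of _ "a1 + a2"])
           (auto simp: matrix_add_rdistrib' ad cl algebra_simps)
    next
      fix M assume "M \<in> L'"
      then obtain l1 a1 where "M = l1 + a1 ** n" "l1 \<in> L" "a1 \<in> A" unfolding L'_def by blast
      then show "- M \<in> L'" unfolding L'_def
        by (intro CollectI exI[of _ "- l1"] exI[of _ "- a1"])
           (auto simp: matrix_neg_left ng negA)
    next
      fix b M assume bA: "b \<in> A" and "M \<in> L'"
      then obtain l1 a1 where "M = l1 + a1 ** n" "l1 \<in> L" "a1 \<in> A" unfolding L'_def by blast
      then show "b ** M \<in> L'" unfolding L'_def
        by (intro CollectI exI[of _ "b ** l1"] exI[of _ "b ** a1"])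
           (auto simp: matrix_add_ldistrib matrix_mul_assoc lm bA cl)
    qed
    moreover have "L \<subseteq> L'" unfolding L'_def using zA by force
    moreover have "n \<in> L'" unfolding L'_def using z eA idl[OF nA] by force
    ultimately have "L' = A" using mx nL by blast
    then obtain l a where l: "l \<in> L" and aA: "a \<in> A" and el: "e = l + a ** n"
      using eA unfolding L'_def by blast
    have anA: "a ** n \<in> A" using cl aA nA by blast
    have ll: "l = e - a ** n" using el by simp
    have mm: "(a ** n) ** (a ** n) = 0" using nil aA by blast
    have "(e + a ** n) ** l = (e + a ** n) ** e - (e + a ** n) ** (a ** n)"
      unfolding ll diff_conv_add_uminus matrix_add_ldistrib matrix_neg_right by simp
    also have "\<dots> = (e ** e + (a ** n) ** e) - (e ** (a ** n) + (a ** n) ** (a ** n))"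
      by (simp only: matrix_add_rdistrib')
    also have "\<dots> = e"
      unfolding mm idl[OF eA] idl[OF anA] idr[OF anA] by simp
    finally have "(e + a ** n) ** l = e" .
    moreover have "e + a ** n \<in> A" using cl eA anA by blast
    ultimately have eL: "e \<in> L" using lm l by metis
    have "A \<subseteq> L"
    proof
      fix b assume bA: "b \<in> A"
      then have "b ** e \<in> L" using lm eL by blast
      then show "b \<in> L" using idr bA by simp
    qed
    then show False using LA LsA by blast
  qed
  then show ?thesis unfolding jacobson_radical_def using nA by blast
qed

lemma good_vec_ann:
  fixes A :: "('f::field^'x::finite^'x) set"
  assumes ua: "unital_alg A e" and es: "e *v s = s"
    and good: "\<forall>M\<in>A. M *v s \<noteq> 0 \<longrightarrow> (\<exists>N\<in>A. N *v (M *v s) = s)"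
    and MJ: "M \<in> jacobson_radical A"
  shows "M *v s = 0"
proof (cases "s = 0")
  case True then show ?thesis by (simp add: matrix_vector_mult_def vec_eq_iff)
next
  case sn: False
  have eA: "e \<in> A" and zA: "0 \<in> A" and cl: "\<And>M N. M\<in>A \<Longrightarrow> N\<in>A \<Longrightarrow> M + N \<in> A \<and> M ** N \<in> A"
    and sm: "\<And>c M. M\<in>A \<Longrightarrow> mat_smult c M \<in> A"
    and idl: "\<And>M. M\<in>A \<Longrightarrow> e ** M = M" and idr: "\<And>M. M\<in>A \<Longrightarrow> M ** e = M"
    using ua unfolding unital_alg_def by auto
  have negA: "\<And>M. M \<in> A \<Longrightarrow> - M \<in> A" using sm mat_smult_neg1 by metis
  define L where "L = {M \<in> A. M *v s = 0}"
  have li: "left_ideal A L"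
    unfolding left_ideal_def L_def
    by (auto simp: cl negA zA sm mv_add_left mv_zero_left matrix_vector_mul_assoc[symmetric]
        mat_smult_neg1[symmetric] mat_smult_mv)
  have "maximal_left_ideal A L"
    unfolding maximal_left_ideal_def
  proof (intro conjI allI impI li)
    show "L \<noteq> A"
    proof
      assume "L = A"
      then have "e \<in> L" using eA by simp
      then show False using es sn unfolding L_def by simp
    qed
  next
    fix L' assume H: "left_ideal A L' \<and> L \<subseteq> L' \<and> L' \<noteq> A"
    have LsA: "L' \<subseteq> A" and ad: "\<And>M N. M\<in>L' \<Longrightarrow> N\<in>L' \<Longrightarrow> M + N \<in> L'"
      and lm: "\<And>a M. a\<in>A \<Longrightarrow> M\<in>L' \<Longrightarrow> a ** M \<in> L'"
      using H unfolding left_ideal_def by auto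
    have "L' \<subseteq> L"
    proof
      fix K assume KL: "K \<in> L'"
      show "K \<in> L"
      proof (rule ccontr)
        assume "K \<notin> L"
        then have Ks: "K *v s \<noteq> 0" using KL LsA unfolding L_def by auto
        then obtain N where NA: "N \<in> A" and NK: "N *v (K *v s) = s" using good KL LsA by blast
        have NKA: "N ** K \<in> A" using cl NA KL LsA by blast
        have "e + - (N ** K) \<in> L"
          unfolding L_def using cl eA negA NKA
          by (simp add: mv_add_left es matrix_vector_mul_assoc[symmetric] NK
               mat_smult_neg1[symmetric] mat_smult_mv)
        then have "e + - (N ** K) \<in> L'" using H by blast
        moreover have "N ** K \<in> L'" using lm NA KL by blast
        ultimately have "(e + - (N ** K)) + N ** K \<in> L'" using ad by blast
        then have eL: "e \<in> L'" by simp
        have "A \<subseteq> L'"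
        proof
          fix b assume bA: "b \<in> A"
          then have "b ** e \<in> L'" using lm eL by blast
          then show "b \<in> L'" using idr bA by simp
        qed
        then show False using H LsA by blast
      qed
    qed
    then show "L' = L" using H by blast
  qed
  then have "M \<in> L" using MJ unfolding jacobson_radical_def by blast
  then show ?thesis unfolding L_def by blast
qed



locale qs =
  fixes d :: nat and R :: "nat \<Rightarrow> ('x::finite \<times> 'x) set" and x :: 'x
  assumes sch: "is_scheme d R"
begin

lemma part1: "\<forall>i\<le>d. R i \<noteq> {}"
  using sch unfolding is_scheme_def by (elim conjE) assumption

lemma part2: "\<forall>i\<le>d. \<forall>j\<le>d. i \<noteq> j \<longrightarrow> R i \<inter> R j = {}"
  using sch unfolding is_scheme_def by (elim conjE) assumption

lemma part3: "(\<Union>i\<le>d. R i) = UNIV"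
  using sch unfolding is_scheme_def by (elim conjE) assumption

lemma part4: "R 0 = Id"
  using sch unfolding is_scheme_def by (elim conjE) assumption

lemma part5: "\<forall>c\<le>d. \<exists>c'\<le>d. R c' = converse (R c)"
  using sch unfolding is_scheme_def by (elim conjE) assumption

lemma part6: "\<forall>i\<le>d. \<forall>j\<le>d. \<forall>k\<le>d. \<forall>m n m' n'. (m, n) \<in> R k \<longrightarrow> (m', n') \<in> R k \<longrightarrow> intersection_count R i j m n = intersection_count R i j m' n'"
  using sch unfolding is_scheme_def by (elim conjE) assumption

lemma ne: "i \<le> d \<Longrightarrow> R i \<noteq> {}" using part1 by simp
lemma disj: "i \<le> d \<Longrightarrow> j \<le> d \<Longrightarrow> i \<noteq> j \<Longrightarrow> R i \<inter> R j = {}"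
  using part2 by simp
lemma cover: "\<exists>i\<le>d. p \<in> R i"
proof -
  have "p \<in> (\<Union>i\<le>d. R i)" using part3 by simp
  then show ?thesis by blast
qed
lemma R0: "R 0 = Id" using part4 .
lemma conv_ex: "c \<le> d \<Longrightarrow> \<exists>c'\<le>d. R c' = converse (R c)"
  using part5 by simp
lemma reg: "i \<le> d \<Longrightarrow> j \<le> d \<Longrightarrow> k \<le> d \<Longrightarrow> (m, n) \<in> R k \<Longrightarrow> (m', n') \<in> R k \<Longrightarrow>
   intersection_count R i j m n = intersection_count R i j m' n'"
  using part6 by blast

lemma uniq: "i \<le> d \<Longrightarrow> j \<le> d \<Longrightarrow> p \<in> R i \<Longrightarrow> p \<in> R j \<Longrightarrow> i = j"
  using disj by blast

definition cls :: "'x \<Rightarrow> nat" where "cls y = (THE b. b \<le> d \<and> (x, y) \<in> R b)"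

lemma cls: "cls y \<le> d \<and> (x, y) \<in> R (cls y)"
proof -
  obtain b where "b \<le> d" "(x, y) \<in> R b" using cover by blast
  then have "\<exists>!b. b \<le> d \<and> (x, y) \<in> R b" using uniq by blast
  then show ?thesis unfolding cls_def by (rule theI')
qed

lemma cls_iff: "b \<le> d \<Longrightarrow> cls y = b \<longleftrightarrow> (x, y) \<in> R b"
  using cls uniq by blast

definition kk :: "nat \<Rightarrow> nat" where "kk b = card {y. cls y = b}"

lemma dual_index: "c \<le> d \<Longrightarrow> dual_index d R c \<le> d \<and> R (dual_index d R c) = converse (R c)"
proof -
  assume c: "c \<le> d"
  obtain c' where c': "c' \<le> d" "R c' = converse (R c)" using conv_ex[OF c] by blast
  have "\<exists>!c'. c' \<le> d \<and> R c' = converse (R c)"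
  proof (rule ex1I[of _ c'])
    fix c2 assume "c2 \<le> d \<and> R c2 = converse (R c)"
    moreover obtain p where "p \<in> R c'" using ne c' by blast
    ultimately show "c2 = c'" using uniq c' by metis
  qed (use c' in auto)
  then show ?thesis unfolding dual_index_def by (rule theI')
qed

lemma ic_xx: "b \<le> d \<Longrightarrow> intersection_count R b (dual_index d R b) x x = kk b"
proof -
  assume b: "b \<le> d"
  have "{l. (x, l) \<in> R b \<and> (l, x) \<in> R (dual_index d R b)} = {y. cls y = b}"
    using dual_index[OF b] cls_iff[OF b] by auto
  then show ?thesis unfolding intersection_count_def kk_def by simp
qed

lemma valency: "b \<le> d \<Longrightarrow> valency d R b = kk b"
proof -
  assume b: "b \<le> d"
  define mn where "mn = (SOME mn. mn \<in> R 0)"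
  have "mn \<in> R 0" unfolding mn_def R0 by (rule someI[of _ "(x,x)"]) simp
  then have "fst mn = snd mn" unfolding R0 by auto
  then have "intersection_count R b (dual_index d R b) (fst mn) (snd mn)
      = intersection_count R b (dual_index d R b) x x"
    using reg[of b "dual_index d R b" 0 "fst mn" "snd mn" x x] b dual_index[OF b] \<open>mn \<in> R 0\<close>
    unfolding R0 by auto
  then show ?thesis unfolding valency_def intersection_number_def Let_def mn_def[symmetric]
    using ic_xx[OF b] by simp
qed

lemma kk_pos: "b \<le> d \<Longrightarrow> kk b \<ge> 1"
proof -
  assume b: "b \<le> d"
  obtain m n where mn: "(m, n) \<in> R b" using ne[OF b] by auto
  have "intersection_count R b (dual_index d R b) m m \<ge> 1"
    unfolding intersection_count_def using mn dual_index[OF b]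
    by (auto intro!: Suc_leI card_gt_0_iff[THEN iffD2])
  moreover have "intersection_count R b (dual_index d R b) m m
      = intersection_count R b (dual_index d R b) x x"
    using reg[of b "dual_index d R b" 0 m m x x] b dual_index[OF b] unfolding R0 by auto
  ultimately show ?thesis using ic_xx[OF b] by simp
qed


lemma sum_group_cls: "(\<Sum>j\<in>S. g j) = (\<Sum>e\<le>d. \<Sum>j\<in>{j\<in>S. cls j = e}. g j)"
  by (rule sum.group[symmetric]) (use cls in auto)

lemma adj_mv: "(adj_matrix R c *v f) $ i = (\<Sum>j\<in>{j. (i, j) \<in> R c}. f $ j)"
  unfolding matrix_vector_mult_def adj_matrix_def
  by (simp add: if_distrib if_distribR sum.inter_filter[symmetric] cong: if_cong)

lemma E_mv: "(dual_idem R x a *v f) $ i = (if (x, i) \<in> R a then f $ i else 0)"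
  unfolding matrix_vector_mult_def dual_idem_def
  by (simp add: if_distrib if_distribR conj_commute sum.delta cong: if_cong)

definition inP :: "'f::field^'x \<Rightarrow> bool" where "inP f \<longleftrightarrow> (\<forall>i j. cls i = cls j \<longrightarrow> f$i = f$j)"
definition inQ :: "'f::field^'x \<Rightarrow> bool" where "inQ f \<longleftrightarrow> (\<forall>b\<le>d. (\<Sum>i\<in>{i. cls i = b}. f$i) = 0)"

definition rep :: "nat \<Rightarrow> 'x" where "rep e = (SOME w. cls w = e)"

lemma ic_cls: "b \<le> d \<Longrightarrow> c \<le> d \<Longrightarrow> intersection_count R b c x j = intersection_count R b c x (rep (cls j))"
proof -
  assume b: "b \<le> d" and c: "c \<le> d"
  have "cls (rep (cls j)) = cls j" unfolding rep_def by (rule someI[of _ j]) simp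
  then have "(x, rep (cls j)) \<in> R (cls j)" using cls by metis
  then show ?thesis using reg[OF b c, of "cls j" x j x "rep (cls j)"] cls by blast
qed

lemma adj_P:
  assumes c: "c \<le> d" and f: "inP (f::'f::field^'x)"
  shows "inP (adj_matrix R c *v f)"
  unfolding inP_def
proof (intro allI impI)
  fix i i' :: 'x assume ii: "cls i = cls i'"
  define c' where "c' = dual_index d R c"
  have c': "c' \<le> d" "R c' = converse (R c)" using dual_index[OF c] unfolding c'_def by auto
  have key: "(adj_matrix R c *v f) $ i = (\<Sum>e\<le>d. of_nat (intersection_count R e c' x i) * f $ rep e)" for i
  proof -
    have "(adj_matrix R c *v f) $ i = (\<Sum>e\<le>d. \<Sum>j\<in>{j\<in>{j. (i, j) \<in> R c}. cls j = e}. f $ j)"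
      unfolding adj_mv by (rule sum_group_cls)
    also have "\<dots> = (\<Sum>e\<le>d. \<Sum>j\<in>{j\<in>{j. (i, j) \<in> R c}. cls j = e}. f $ rep e)"
    proof (intro sum.cong refl)
      fix e j assume "j \<in> {j\<in>{j. (i, j) \<in> R c}. cls j = e}"
      then have "cls j = e" by simp
      moreover have "cls (rep (cls j)) = cls j" unfolding rep_def by (rule someI[of _ j]) simp
      ultimately show "f $ j = f $ rep e" using f unfolding inP_def by metis
    qed
    also have "\<dots> = (\<Sum>e\<le>d. of_nat (intersection_count R e c' x i) * f $ rep e)"
    proof (intro sum.cong refl)
      fix e assume e: "e \<in> {..d}"
      have "{j\<in>{j. (i, j) \<in> R c}. cls j = e} = {l. (x, l) \<in> R e \<and> (l, i) \<in> R c'}"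
        using cls_iff[of e] e c' by auto
      then show "(\<Sum>j\<in>{j\<in>{j. (i, j) \<in> R c}. cls j = e}. f $ rep e) = of_nat (intersection_count R e c' x i) * f $ rep e"
        unfolding intersection_count_def by simp
    qed
    finally show ?thesis .
  qed
  have "intersection_count R e c' x i = intersection_count R e c' x i'" if "e \<le> d" for e
    using ic_cls[OF that c'(1), of i] ic_cls[OF that c'(1), of i'] ii by simp
  then show "(adj_matrix R c *v f) $ i = (adj_matrix R c *v f) $ i'"
    unfolding key by (intro sum.cong refl) auto
qed


lemma adj_Q:
  assumes c: "c \<le> d" and f: "inQ (f::'f::field^'x)"
  shows "inQ (adj_matrix R c *v f)"
  unfolding inQ_def
proof (intro allI impI)
  fix b assume b: "b \<le> d"
  define h where "h e = intersection_count R b c x (rep e)" for e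
  have hc: "card {i. cls i = b \<and> (i, j) \<in> R c} = h (cls j)" for j
  proof -
    have "{i. cls i = b \<and> (i, j) \<in> R c} = {l. (x, l) \<in> R b \<and> (l, j) \<in> R c}"
      using cls_iff[OF b] by auto
    then show ?thesis unfolding h_def using ic_cls[OF b c, of j] unfolding intersection_count_def
      by simp
  qed
  have "(\<Sum>i\<in>{i. cls i = b}. (adj_matrix R c *v f) $ i)
      = (\<Sum>i\<in>{i. cls i = b}. \<Sum>j\<in>UNIV. if (i, j) \<in> R c then f $ j else 0)"
    unfolding adj_mv by (simp add: sum.inter_filter[symmetric])
  also have "\<dots> = (\<Sum>j\<in>UNIV. \<Sum>i\<in>{i. cls i = b}. if (i, j) \<in> R c then f $ j else 0)"
    by (rule sum.swap)
  also have "\<dots> = (\<Sum>j\<in>UNIV. of_nat (h (cls j)) * f $ j)"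
  proof (intro sum.cong refl)
    fix j
    have "(\<Sum>i\<in>{i. cls i = b}. if (i, j) \<in> R c then f $ j else 0)
        = (\<Sum>i\<in>{i\<in>{i. cls i = b}. (i, j) \<in> R c}. f $ j)"
      by (rule sum.inter_filter[symmetric]) simp
    also have "{i\<in>{i. cls i = b}. (i, j) \<in> R c} = {i. cls i = b \<and> (i, j) \<in> R c}" by simp
    also have "(\<Sum>i\<in>{i. cls i = b \<and> (i, j) \<in> R c}. f $ j) = of_nat (card {i. cls i = b \<and> (i, j) \<in> R c}) * f $ j"
      by simp
    finally show "(\<Sum>i\<in>{i. cls i = b}. if (i, j) \<in> R c then f $ j else 0) = of_nat (h (cls j)) * f $ j"
      unfolding hc .
  qed
  also have "\<dots> = (\<Sum>e\<le>d. \<Sum>j\<in>{j\<in>UNIV. cls j = e}. of_nat (h (cls j)) * f $ j)"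
    by (rule sum_group_cls)
  also have "\<dots> = (\<Sum>e\<le>d. of_nat (h e) * (\<Sum>j\<in>{j. cls j = e}. f $ j))"
    by (simp add: sum_distrib_left)
  also have "\<dots> = 0" using f unfolding inQ_def by simp
  finally show "(\<Sum>i\<in>{i. cls i = b}. (adj_matrix R c *v f) $ i) = 0" .
qed

lemma E_P: "a \<le> d \<Longrightarrow> inP (f::'f::field^'x) \<Longrightarrow> inP (dual_idem R x a *v f)"
  unfolding inP_def E_mv using cls_iff by (metis (no_types, lifting))

lemma E_Q: "a \<le> d \<Longrightarrow> inQ (f::'f::field^'x) \<Longrightarrow> inQ (dual_idem R x a *v f)"
  unfolding inQ_def E_mv
proof (intro allI impI)
  fix b assume a: "a \<le> d" and f: "\<forall>b\<le>d. (\<Sum>i\<in>{i. cls i = b}. f $ i) = 0" and b: "b \<le> d"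
  have "(\<Sum>i\<in>{i. cls i = b}. if (x, i) \<in> R a then f $ i else 0) = (\<Sum>i\<in>{i. cls i = b}. if a = b then f $ i else 0)"
  proof (intro sum.cong refl)
    fix i assume "i \<in> {i. cls i = b}"
    then have "((x, i) \<in> R a) = (a = b)" using cls_iff[OF a, of i] by auto
    then show "(if (x, i) \<in> R a then f $ i else 0) = (if a = b then f $ i else 0)" by simp
  qed
  then show "(\<Sum>i\<in>{i. cls i = b}. if (x, i) \<in> R a then f $ i else 0) = 0"
    using f b by (cases "a = b") auto
qed

lemma P_add: "inP f \<Longrightarrow> inP g \<Longrightarrow> inP (f + g)" unfolding inP_def by (metis vector_add_component)
lemma P_smult: "inP f \<Longrightarrow> inP (c *s f)" unfolding inP_def by (metis vector_smult_component)
lemma Q_add: "inQ f \<Longrightarrow> inQ g \<Longrightarrow> inQ (f + g)" unfolding inQ_def by (simp add: sum.distrib)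
lemma Q_smult: "inQ f \<Longrightarrow> inQ (c *s f)" unfolding inQ_def by (simp add: sum_distrib_left[symmetric])

lemma T_inv:
  assumes "M \<in> (terwilliger_alg d R x :: ('f::field^'x^'x) set)"
  shows "\<forall>f. (inP f \<longrightarrow> inP (M *v f)) \<and> (inQ f \<longrightarrow> inQ (M *v f))"
  using assms unfolding terwilliger_alg_def
proof (induction)
  case (gen M)
  then obtain a where a: "a \<le> d" and dj: "M = adj_matrix R a \<or> M = dual_idem R x a" by auto
  show ?case using dj
  proof (elim disjE)
    assume "M = adj_matrix R a" then show ?case using adj_P[OF a] adj_Q[OF a] by blast
  next
    assume "M = dual_idem R x a" then show ?case using E_P[OF a] E_Q[OF a] by blast
  qed
next
  case one
  then show ?case by simp
next
  case (add M N)
  then show ?case unfolding mv_add_left using P_add Q_add by blast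
next
  case (smult M c)
  then show ?case unfolding mat_smult_mv using P_smult Q_smult by blast
next
  case (mult M N)
  then show ?case unfolding matrix_vector_mul_assoc[symmetric] by blast
qed

end


lemma transpose_add': "transpose (A + B) = transpose A + transpose B"
  by (simp add: transpose_def vec_eq_iff)

lemma transpose_smult': "transpose (mat_smult c M) = mat_smult c (transpose M)"
  by (simp add: transpose_def mat_smult_def vec_eq_iff)

lemma transpose_mv_sum:
  fixes N :: "'f::comm_ring_1^'x::finite^'x"
  shows "(\<Sum>j\<in>UNIV. (transpose N *v r) $ j * q $ j) = (\<Sum>k\<in>UNIV. r $ k * (N *v q) $ k)"
proof -
  have "(\<Sum>j\<in>UNIV. (transpose N *v r) $ j * q $ j) = (\<Sum>j\<in>UNIV. \<Sum>k\<in>UNIV. N $ k $ j * r $ k * q $ j)"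
    by (simp add: matrix_vector_mult_def transpose_def sum_distrib_right)
  also have "\<dots> = (\<Sum>k\<in>UNIV. \<Sum>j\<in>UNIV. N $ k $ j * r $ k * q $ j)" by (rule sum.swap)
  also have "\<dots> = (\<Sum>k\<in>UNIV. r $ k * (N *v q) $ k)"
    by (simp add: matrix_vector_mult_def sum_distrib_left mult_ac)
  finally show ?thesis .
qed

definition ev :: "'x::finite \<Rightarrow> 'f::field^'x" where "ev y = (\<chi> i. if i = y then 1 else 0)"

lemma mv_ev: "(M *v ev y) $ j = M $ j $ y"
  unfolding matrix_vector_mult_def ev_def by (simp add: if_distrib cong: if_cong)

lemma mat_eq0_ev: "(\<And>y. M *v ev y = 0) \<Longrightarrow> M = 0"
  by (metis mv_ev vec_eq_iff zero_index)

lemma sum_if_conj: "(\<Sum>k\<in>(UNIV::'x::finite set). if k = j \<and> P k then c k else 0) = (if P j then c j else (0::'a::comm_monoid_add))"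
proof -
  have "(\<Sum>k\<in>(UNIV::'x set). if k = j \<and> P k then c k else 0) = (\<Sum>k\<in>UNIV. if k = j then (if P j then c j else 0) else 0)"
    by (rule sum.cong) auto
  then show ?thesis by (simp add: sum.delta)
qed

context qs begin

abbreviation TT where "TT \<equiv> terwilliger_alg d R x"

lemma T_adj: "a \<le> d \<Longrightarrow> adj_matrix R a \<in> TT"
  unfolding terwilliger_alg_def by (rule gen_subalg.gen) auto
lemma T_E: "a \<le> d \<Longrightarrow> dual_idem R x a \<in> TT"
  unfolding terwilliger_alg_def by (rule gen_subalg.gen) auto
lemma T_one: "mat 1 \<in> TT"
  unfolding terwilliger_alg_def by (rule gen_subalg.one)
lemma T_add: "M \<in> TT \<Longrightarrow> N \<in> TT \<Longrightarrow> M + N \<in> TT"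
  unfolding terwilliger_alg_def by (rule gen_subalg.add)
lemma T_mult: "M \<in> TT \<Longrightarrow> N \<in> TT \<Longrightarrow> M ** N \<in> TT"
  unfolding terwilliger_alg_def by (rule gen_subalg.mult)
lemma T_smult: "M \<in> TT \<Longrightarrow> mat_smult c M \<in> TT"
  unfolding terwilliger_alg_def by (rule gen_subalg.smult)
lemma T_zero: "0 \<in> TT"
  using T_smult[OF T_one, of 0] by (simp add: mat_smult_0)

lemma T_unital: "unital_alg TT (mat 1)"
  unfolding unital_alg_def using T_one T_zero T_add T_mult T_smult by auto

lemma transpose_adj: "a \<le> d \<Longrightarrow> transpose (adj_matrix R a) = adj_matrix R (dual_index d R a)"
  using dual_index[of a] unfolding adj_matrix_def transpose_def by (auto simp: vec_eq_iff)

lemma transpose_E: "transpose (dual_idem R x a) = dual_idem R x a"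
  unfolding dual_idem_def transpose_def by (auto simp: vec_eq_iff)

lemma T_transpose: "M \<in> TT \<Longrightarrow> transpose M \<in> TT"
  unfolding terwilliger_alg_def
proof (induction rule: gen_subalg.induct)
  case (gen M)
  then obtain a where a: "a \<le> d" and dj: "M = adj_matrix R a \<or> M = dual_idem R x a" by auto
  show ?case using dj
  proof (elim disjE)
    assume "M = adj_matrix R a" then show ?thesis
      unfolding \<open>M = adj_matrix R a\<close> transpose_adj[OF a]
      by (intro gen_subalg.gen) (use dual_index[OF a] in auto)
  next
    assume "M = dual_idem R x a" then show ?thesis
      unfolding \<open>M = dual_idem R x a\<close> transpose_E
      by (intro gen_subalg.gen) (use a in auto)
  qed
next
  case one then show ?case by (simp add: gen_subalg.one)
next
  case (add M N) then show ?case by (simp add: transpose_add' gen_subalg.add)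
next
  case (smult M c) then show ?case by (simp add: transpose_smult' gen_subalg.smult)
next
  case (mult M N) then show ?case by (simp add: matrix_transpose_mul gen_subalg.mult)
qed

lemma E_mult_left: "(dual_idem R x a ** M) $ i $ j = (if (x, i) \<in> R a then M $ i $ j else 0)"
  unfolding matrix_matrix_mult_def dual_idem_def by (simp add: if_distrib if_distribR sum.delta cong: if_cong)
lemma E_mult_right: "(M ** dual_idem R x a) $ i $ j = (if (x, j) \<in> R a then M $ i $ j else 0)"
  unfolding matrix_matrix_mult_def dual_idem_def
  by (simp add: if_distrib if_distribR sum_if_conj cong: if_cong)

lemma EE: "dual_idem R x a ** dual_idem R x a = (dual_idem R x a :: 'f::field^'x^'x)"
  by (simp add: vec_eq_iff E_mult_left) (simp add: dual_idem_def)

definition uu :: "nat \<Rightarrow> 'f::field^'x" where "uu a = (\<chi> i. if cls i = a then 1 else 0)"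

lemma u_P: "inP (uu a)" unfolding inP_def uu_def by simp

lemma E_u: "a \<le> d \<Longrightarrow> dual_idem R x a *v uu a = uu a"
  by (simp add: vec_eq_iff E_mv uu_def cls_iff)

end


lemma sum_ind: "(\<Sum>k\<in>(UNIV::'x::finite set). (if P k then 1 else 0) * f k) = (\<Sum>k\<in>{k. P k}. (f k::'a::semiring_1))"
proof -
  have "(\<Sum>k\<in>(UNIV::'x set). (if P k then 1 else 0) * f k) = (\<Sum>k\<in>UNIV. if P k then f k else 0)"
    by (rule sum.cong) auto
  then show ?thesis by (simp add: sum.inter_filter[symmetric])
qed

lemma sum_ind': "(\<Sum>k\<in>(UNIV::'x::finite set). f k * (if P k then 1 else 0)) = (\<Sum>k\<in>{k. P k}. (f k::'a::semiring_1))"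
proof -
  have "(\<Sum>k\<in>(UNIV::'x set). f k * (if P k then 1 else 0)) = (\<Sum>k\<in>UNIV. if P k then f k else 0)"
    by (rule sum.cong) auto
  then show ?thesis by (simp add: sum.inter_filter[symmetric])
qed

context qs begin

lemma rep_cls: "a \<le> d \<Longrightarrow> cls (rep a) = a"
proof -
  assume a: "a \<le> d"
  have "card {y. cls y = a} \<noteq> 0" using kk_pos[OF a] unfolding kk_def by linarith
  then have "{y. cls y = a} \<noteq> {}" by (metis card.empty)
  then obtain y where "cls y = a" by blast
  then show ?thesis unfolding rep_def by (rule someI)
qed

lemma Jm_entry: "(\<Sum>b\<in>{..d}. adj_matrix R b) $ i $ j = (1::'f::field)"
proof -
  obtain b0 where b0: "b0 \<le> d" "(i, j) \<in> R b0" using cover by blast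
  have "(\<Sum>b\<in>{..d}. adj_matrix R b) $ i $ j = (\<Sum>b\<in>{..d}. if (i, j) \<in> R b then (1::'f) else 0)"
    by (simp add: adj_matrix_def)
  also have "\<dots> = (\<Sum>b\<in>{..d}. if b = b0 then 1 else 0)"
    using uniq b0 by (intro sum.cong refl) auto
  also have "\<dots> = 1" using b0 by simp
  finally show ?thesis .
qed

lemma T_sum: "(\<Sum>b\<in>{..n}. adj_matrix R b :: 'f::field^'x^'x) \<in> TT" if "n \<le> d"
  using that
proof (induction n)
  case 0 then show ?case by (simp, rule T_adj) 
next
  case (Suc n)
  have h: "(\<Sum>b\<in>{..n}. adj_matrix R b :: 'f::field^'x^'x) \<in> TT" using Suc by simp
  show ?case unfolding sum.atMost_Suc by (rule T_add[OF h T_adj[OF Suc.prems]])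
qed

definition nn :: "nat \<Rightarrow> 'f::field^'x^'x" where
  "nn a = dual_idem R x a ** (\<Sum>b\<in>{..d}. adj_matrix R b) ** dual_idem R x a"

lemma nn_entry: "a \<le> d \<Longrightarrow> nn a $ i $ j = (if cls i = a \<and> cls j = a then 1 else 0)"
  unfolding nn_def by (simp only: E_mult_left E_mult_right Jm_entry) (simp add: cls_iff)

lemma nn_T: "a \<le> d \<Longrightarrow> nn a \<in> TT"
  unfolding nn_def using T_mult T_E T_sum by blast

lemma nn_nonzero: "a \<le> d \<Longrightarrow> nn a \<noteq> (0::'f::field^'x^'x)"
proof
  assume a: "a \<le> d" and z: "nn a = (0::'f^'x^'x)"
  have "nn a $ rep a $ rep a = (1::'f)" using nn_entry[OF a, of "rep a" "rep a"] rep_cls[OF a] by simp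
  then show False using z by simp
qed

lemma nMn:
  assumes a: "a \<le> d" and k0: "of_nat (kk a) = (0::'f::field)" and M: "M \<in> TT"
  shows "nn a ** M ** nn a = (0::'f^'x^'x)"
proof -
  define C where "C = {k. cls k = a}"
  define S where "S = (\<Sum>k\<in>C. (M *v uu a) $ k)"
  have "inP (M *v uu a)" using T_inv[OF M] u_P by blast
  have S0: "S = 0"
  proof -
    have "S = (\<Sum>k\<in>C. (M *v uu a) $ rep a)"
      unfolding S_def C_def using \<open>inP (M *v uu a)\<close> rep_cls[OF a]
      by (intro sum.cong refl) (simp add: inP_def)
    also have "\<dots> = of_nat (kk a) * (M *v uu a) $ rep a" unfolding C_def kk_def by simp
    finally show ?thesis using k0 by simp
  qed
  have mv: "(M *v uu a) $ k = (\<Sum>l\<in>C. M $ k $ l)" for k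
    unfolding matrix_vector_mult_def uu_def C_def using sum_ind' by simp
  have e1: "(nn a ** M) $ i $ l = (if cls i = a then (\<Sum>k\<in>C. M $ k $ l) else 0)" for i l
  proof (cases "cls i = a")
    case True
    then show ?thesis unfolding matrix_matrix_mult_def nn_entry[OF a] C_def using sum_ind by simp
  next
    case False
    then show ?thesis unfolding matrix_matrix_mult_def nn_entry[OF a] by simp
  qed
  have "(nn a ** M ** nn a) $ i $ j = (if cls i = a \<and> cls j = a then (\<Sum>l\<in>C. \<Sum>k\<in>C. M $ k $ l) else 0)" for i j
  proof (cases "cls j = a")
    case True
    have "(nn a ** M ** nn a) $ i $ j = (\<Sum>l\<in>C. (nn a ** M) $ i $ l)"
      unfolding matrix_matrix_mult_def[of "nn a ** M"] nn_entry[OF a] C_def using True sum_ind' by simp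
    then show ?thesis unfolding e1 using True by (cases "cls i = a") simp_all
  next
    case False
    then show ?thesis unfolding matrix_matrix_mult_def[of "nn a ** M"] nn_entry[OF a] by simp
  qed
  moreover have "(\<Sum>l\<in>C. \<Sum>k\<in>C. M $ k $ l) = S"
    unfolding S_def mv by (rule sum.swap)
  ultimately show ?thesis using S0 by (simp add: vec_eq_iff)
qed


lemma nil_T: "a \<le> d \<Longrightarrow> of_nat (kk a) = (0::'f::field) \<Longrightarrow> M \<in> TT \<Longrightarrow>
   (M ** nn a) ** (M ** nn a) = (0::'f^'x^'x)"
proof -
  assume a: "a \<le> d" and k: "of_nat (kk a) = (0::'f)" and M: "M \<in> TT"
  have "(M ** nn a) ** (M ** nn a) = M ** (nn a ** M ** nn a)" by (simp add: matrix_mul_assoc)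
  also have "\<dots> = 0" using nMn[OF a k M] by simp
  finally show ?thesis .
qed

lemma notp_T: "a \<le> d \<Longrightarrow> of_nat (kk a) = (0::'f::field) \<Longrightarrow> \<not> semisimple_alg (TT :: ('f^'x^'x) set) (mat 1)"
proof
  assume a: "a \<le> d" and k: "of_nat (kk a) = (0::'f)" and ss: "semisimple_alg (TT :: ('f^'x^'x) set) (mat 1)"
  have "nn a \<in> jacobson_radical (TT :: ('f^'x^'x) set)"
    using nil_in_radical[OF T_unital nn_T[OF a]] nil_T[OF a k] by blast
  then show False using ss nn_nonzero[OF a] unfolding semisimple_alg_def by auto
qed

definition BB :: "nat \<Rightarrow> ('f::field^'x^'x) set" where
  "BB a = {dual_idem R x a ** M ** dual_idem R x a | M. M \<in> TT}"

lemma BB_T: "a \<le> d \<Longrightarrow> N \<in> BB a \<Longrightarrow> N \<in> TT"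
  unfolding BB_def using T_mult T_E by blast

lemma notp_B: "a \<le> d \<Longrightarrow> of_nat (kk a) = (0::'f::field) \<Longrightarrow> \<not> semisimple_alg (BB a :: ('f^'x^'x) set) (dual_idem R x a)"
proof
  assume a: "a \<le> d" and k: "of_nat (kk a) = (0::'f)" and ss: "semisimple_alg (BB a :: ('f^'x^'x) set) (dual_idem R x a)"
  have nB: "nn a \<in> (BB a :: ('f^'x^'x) set)"
    unfolding BB_def nn_def using T_sum[of d] by blast
  have "nn a \<in> jacobson_radical (BB a :: ('f^'x^'x) set)"
    using ss nil_in_radical[OF _ nB] nil_T[OF a k] BB_T[OF a] unfolding semisimple_alg_def by blast
  then show False using ss nn_nonzero[OF a] unfolding semisimple_alg_def by auto
qed

lemma B_unital: "a \<le> d \<Longrightarrow> unital_alg (BB a :: ('f::field^'x^'x) set) (dual_idem R x a)"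
proof -
  assume a: "a \<le> d"
  let ?E = "dual_idem R x a :: 'f^'x^'x"
  have EE': "?E ** ?E = ?E" by (rule EE)
  have EE2: "\<And>X. X ** ?E ** ?E = X ** ?E" by (metis EE' matrix_mul_assoc)
  show ?thesis unfolding unital_alg_def
  proof (intro conjI ballI allI)
    show "?E \<in> BB a" unfolding BB_def using T_one EE' by (intro CollectI exI[of _ "mat 1"]) simp
    show "0 \<in> BB a" unfolding BB_def using T_zero by (intro CollectI exI[of _ 0]) simp
  next
    fix M N :: "'f^'x^'x" assume "M \<in> BB a" "N \<in> BB a"
    then obtain M' N' where M': "M' \<in> TT" "M = ?E ** M' ** ?E" and N': "N' \<in> TT" "N = ?E ** N' ** ?E"
      unfolding BB_def by blast
    show "M + N \<in> BB a" unfolding BB_def M' N'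
      by (intro CollectI exI[of _ "M' + N'"]) (simp add: T_add M' N' matrix_add_ldistrib matrix_add_rdistrib')
    have "M ** N = ?E ** (M' ** ?E ** N') ** ?E" unfolding M' N' by (simp add: matrix_mul_assoc EE2)
    then show "M ** N \<in> BB a" unfolding BB_def using T_mult T_E[OF a] M' N' by blast
  next
    fix c and M :: "'f^'x^'x" assume "M \<in> BB a"
    then obtain M' where M': "M' \<in> TT" "M = ?E ** M' ** ?E" unfolding BB_def by blast
    show "mat_smult c M \<in> BB a" unfolding BB_def M'
      by (intro CollectI exI[of _ "mat_smult c M'"]) (simp add: T_smult M' mat_smult_mult_left mat_smult_mult_right)
  next
    fix M :: "'f^'x^'x" assume "M \<in> BB a"
    then obtain M' where M': "M' \<in> TT" "M = ?E ** M' ** ?E" unfolding BB_def by blast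
    show "?E ** M = M" unfolding M' using EE' by (simp add: matrix_mul_assoc)
    show "M ** ?E = M" unfolding M' using EE' by (simp add: matrix_mul_assoc[symmetric])
  qed
qed

end


context qs begin

lemma E0_mv: "dual_idem R x 0 *v g = g $ x *s (ev x :: 'f::field^'x)"
  by (simp add: vec_eq_iff E_mv R0 ev_def)

lemma adj_u_x: "b \<le> d \<Longrightarrow> (adj_matrix R b *v uu b) $ x = (of_nat (kk b) :: 'f::field)"
proof -
  assume b: "b \<le> d"
  have "(adj_matrix R b *v (uu b :: 'f^'x)) $ x = (\<Sum>j\<in>{j. (x, j) \<in> R b}. 1)"
    unfolding adj_mv uu_def using cls_iff[OF b] by (intro sum.cong refl) auto
  also have "{j. (x, j) \<in> R b} = {j. cls j = b}" using cls_iff[OF b] by auto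
  finally show ?thesis unfolding kk_def by simp
qed

lemma adj_dual_ev: "a \<le> d \<Longrightarrow> adj_matrix R (dual_index d R a) *v ev x = (uu a :: 'f::field^'x)"
proof -
  assume a: "a \<le> d"
  show ?thesis
  proof (subst vec_eq_iff, intro allI)
    fix j
    have "(adj_matrix R (dual_index d R a) *v (ev x :: 'f^'x)) $ j
        = (\<Sum>l\<in>{l. (j, l) \<in> R (dual_index d R a)}. if l = x then 1 else 0)"
      unfolding adj_mv ev_def by simp
    also have "\<dots> = (if (j, x) \<in> R (dual_index d R a) then 1 else 0)"
      by (simp add: sum.delta)
    also have "\<dots> = (uu a :: 'f^'x) $ j"
      unfolding uu_def using dual_index[OF a] cls_iff[OF a] by auto
    finally show "(adj_matrix R (dual_index d R a) *v (ev x :: 'f^'x)) $ j = (uu a :: 'f^'x) $ j" .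
  qed
qed

lemma E_inP: "inP w \<Longrightarrow> cls i = b \<Longrightarrow> b \<le> d \<Longrightarrow> dual_idem R x b *v w = w $ i *s (uu b :: 'f::field^'x)"
  unfolding inP_def by (auto simp: vec_eq_iff E_mv uu_def cls_iff[symmetric])

lemma good_u_T:
  assumes pv: "\<forall>b\<le>d. of_nat (kk b) \<noteq> (0::'f::field)" and a: "a \<le> d"
  shows "\<forall>M\<in>TT. M *v uu a \<noteq> 0 \<longrightarrow> (\<exists>N\<in>TT. N *v (M *v uu a) = (uu a :: 'f^'x))"
proof (intro ballI impI)
  fix M :: "'f^'x^'x" assume M: "M \<in> TT" and nz: "M *v uu a \<noteq> 0"
  define w where "w = M *v uu a"
  have wP: "inP w" unfolding w_def using T_inv[OF M] u_P by blast
  obtain i where wi: "w $ i \<noteq> 0" using nz unfolding w_def by (metis vec_eq_iff zero_index)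
  define b where "b = cls i"
  have b: "b \<le> d" unfolding b_def using cls by blast
  define c where "c = w $ i * of_nat (kk b)"
  have c: "c \<noteq> 0" unfolding c_def using wi pv b by simp
  define a' where "a' = dual_index d R a"
  have a': "a' \<le> d" unfolding a'_def using dual_index[OF a] by blast
  define N where "N = mat_smult (inverse c)
     (adj_matrix R a' ** dual_idem R x 0 ** adj_matrix R b ** dual_idem R x b)"
  have NT: "N \<in> TT" unfolding N_def by (intro T_smult T_mult T_adj T_E a' b) simp
  have "N *v w = inverse c *s (adj_matrix R a' *v (dual_idem R x 0 *v (adj_matrix R b *v (dual_idem R x b *v w))))"
    unfolding N_def mat_smult_mv by (simp add: matrix_vector_mul_assoc matrix_mul_assoc)
  also have "dual_idem R x b *v w = w $ i *s uu b" using E_inP[OF wP b_def[symmetric] b] .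
  also have "dual_idem R x 0 *v (adj_matrix R b *v (w $ i *s uu b)) = c *s ev x"
  proof -
    have ax: "(adj_matrix R b *v (uu b :: 'f^'x)) $ x = of_nat (kk b)" by (rule adj_u_x[OF b])
    show ?thesis unfolding E0_mv mv_smult_right c_def by (simp add: ax)
  qed
  also have "adj_matrix R a' *v (c *s ev x) = c *s uu a"
    unfolding mv_smult_right a'_def adj_dual_ev[OF a] ..
  finally have "N *v w = uu a" using c by simp
  then show "\<exists>N\<in>TT. N *v (M *v uu a) = uu a" using NT unfolding w_def by blast
qed


lemma ev_diff_Q: "cls y = cls z \<Longrightarrow> inQ (ev y - ev z :: 'f::field^'x)"
  unfolding inQ_def ev_def by (simp add: sum_subtractf sum.delta)

lemma ev_comp: "(ev y :: 'f::field^'x) $ j = (if j = y then 1 else 0)" unfolding ev_def by simp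

lemma pair_class:
  assumes qt: "\<forall>b\<le>d. kk b \<le> 2" and wQ: "inQ (w :: 'f::field^'x)" and wi: "w $ i \<noteq> 0"
  shows "\<exists>i'. i' \<noteq> i \<and> {j. cls j = cls i} = {i, i'} \<and> w $ i' = - w $ i"
proof -
  define C where "C = {j. cls j = cls i}"
  have b: "cls i \<le> d" using cls by blast
  have iC: "i \<in> C" unfolding C_def by simp
  have c2: "card C \<le> 2" using qt b unfolding kk_def C_def by simp
  have sum0: "(\<Sum>j\<in>C. w $ j) = 0" using wQ b unfolding inQ_def C_def by simp
  have "card C \<noteq> 1"
  proof
    assume "card C = 1"
    then obtain p where "C = {p}" by (metis One_nat_def card_1_singleton_iff)
    then have "C = {i}" using iC by simp
    then show False using sum0 wi by simp
  qed
  moreover have "card C \<noteq> 0" using iC by (metis card_0_eq empty_iff finite)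
  ultimately have "card C = 2" using c2 by linarith
  then obtain p1 p2 where C: "C = {p1, p2}" "p1 \<noteq> p2" by (metis card_2_iff)
  have "\<exists>i'. i' \<noteq> i \<and> C = {i, i'}"
  proof (cases "i = p1")
    case True then show ?thesis using C by (intro exI[of _ p2]) auto
  next
    case False then have "i = p2" using iC C by auto
    then show ?thesis using C by (intro exI[of _ p1]) auto
  qed
  then obtain i' where i': "i' \<noteq> i" "C = {i, i'}" by blast
  then have "w $ i + w $ i' = 0" using sum0 by simp
  then show ?thesis using i' unfolding C_def by (intro exI[of _ i']) (simp add: eq_neg_iff_add_eq_0 add.commute)
qed

lemma good_q_T:
  assumes qt: "\<forall>b\<le>d. kk b \<le> 2" and two: "(2::'f::field) \<noteq> 0"
    and a: "a \<le> d" and yz: "{j. cls j = a} = {y, z}" "y \<noteq> z"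
  shows "\<forall>M\<in>TT. M *v (ev y - ev z) \<noteq> 0 \<longrightarrow> (\<exists>N\<in>TT. N *v (M *v (ev y - ev z)) = (ev y - ev z :: 'f^'x))"
proof (intro ballI impI)
  fix M :: "'f^'x^'x" assume M: "M \<in> TT" and nz: "M *v (ev y - ev z) \<noteq> 0"
  define q :: "'f^'x" where "q = ev y - ev z"
  have cy: "cls y = a" and cz: "cls z = a" using yz by auto
  have qQ: "inQ q" unfolding q_def by (rule ev_diff_Q) (simp add: cy cz)
  have Eq: "dual_idem R x a *v q = q"
    unfolding q_def by (auto simp: vec_eq_iff E_mv ev_comp cls_iff[OF a, symmetric] cy cz)
  define w where "w = M *v q"
  have wQ: "inQ w" unfolding w_def using T_inv[OF M] qQ by blast
  obtain i where wi: "w $ i \<noteq> 0" using nz unfolding w_def q_def by (metis vec_eq_iff zero_index)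
  obtain i' where i': "i' \<noteq> i" "{j. cls j = cls i} = {i, i'}" "w $ i' = - w $ i"
    using pair_class[OF qt wQ wi] by blast
  define b where "b = cls i"
  have b: "b \<le> d" unfolding b_def using cls by blast
  define \<mu> where "\<mu> = w $ i"
  define r :: "'f^'x" where "r = ev i - ev i'"
  have cii: "cls i' = cls i" using i'(2) by blast
  have rQ: "inQ r" unfolding r_def by (rule ev_diff_Q) (simp add: cii)
  have Ew: "dual_idem R x b *v w = \<mu> *s r"
  proof (subst vec_eq_iff, intro allI)
    fix j
    show "(dual_idem R x b *v w) $ j = (\<mu> *s r) $ j"
    proof (cases "cls j = b")
      case True
      then have "j = i \<or> j = i'" using i'(2) unfolding b_def by blast
      then show ?thesis using True i' unfolding E_mv r_def \<mu>_def b_def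
        by (auto simp: ev_comp cls_iff[OF cls[THEN conjunct1], symmetric])
    next
      case False
      then have "j \<noteq> i" "j \<noteq> i'" using cii unfolding b_def by auto
      then show ?thesis using False unfolding E_mv r_def
        by (auto simp: ev_comp cls_iff[OF b, symmetric])
    qed
  qed
  define N0 where "N0 = dual_idem R x b ** M ** dual_idem R x a"
  have N0T: "N0 \<in> TT" unfolding N0_def by (intro T_mult T_E M a b)
  have N0q: "N0 *v q = \<mu> *s r"
    unfolding N0_def by (simp add: matrix_vector_mul_assoc[symmetric] Eq w_def[symmetric] Ew)
  define K where "K = transpose N0"
  have KT: "K \<in> TT" unfolding K_def using T_transpose N0T by blast
  define g where "g = K *v r"
  have gQ: "inQ g" unfolding g_def using T_inv[OF KT] rQ by blast
  have Ksupp: "g $ j = 0" if "cls j \<noteq> a" for j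
  proof -
    have "K = dual_idem R x a ** transpose (dual_idem R x b ** M)"
      unfolding K_def N0_def by (simp add: matrix_transpose_mul transpose_E)
    then have "g = dual_idem R x a *v (transpose (dual_idem R x b ** M) *v r)"
      unfolding g_def by (simp del: transpose_matrix_vector add: matrix_vector_mul_assoc)
    then show ?thesis using that by (simp add: E_mv cls_iff[OF a, symmetric])
  qed
  have gyz: "g $ y + g $ z = 0"
  proof -
    have "(\<Sum>j\<in>{j. cls j = a}. g $ j) = 0" using gQ a unfolding inQ_def by simp
    then show ?thesis unfolding yz using yz(2) by simp
  qed
  have lhs: "(\<Sum>j\<in>UNIV. g $ j * q $ j) = g $ y - g $ z"
  proof -
    have "(\<Sum>j\<in>UNIV. g $ j * q $ j) = (\<Sum>j\<in>UNIV. (if j = y then g $ j else 0) - (if j = z then g $ j else 0))"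
      unfolding q_def by (intro sum.cong refl) (simp add: ev_comp right_diff_distrib)
    also have "\<dots> = g $ y - g $ z" by (simp add: sum_subtractf sum.delta)
    finally show ?thesis .
  qed
  have rr: "(\<Sum>k\<in>UNIV. r $ k * r $ k) = (2::'f)"
  proof -
    have "(\<Sum>k\<in>UNIV. r $ k * r $ k) = (\<Sum>k\<in>UNIV. (if k = i then 1 else 0) + (if k = i' then (1::'f) else 0))"
      unfolding r_def using i'(1) by (intro sum.cong refl) (auto simp: ev_comp)
    also have "\<dots> = 2" by (simp add: sum.distrib)
    finally show ?thesis .
  qed
  have "(\<Sum>j\<in>UNIV. g $ j * q $ j) = (\<Sum>k\<in>UNIV. r $ k * (N0 *v q) $ k)"
    unfolding g_def K_def by (rule transpose_mv_sum)
  also have "\<dots> = \<mu> * (\<Sum>k\<in>UNIV. r $ k * r $ k)"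
    unfolding N0q by (simp add: sum_distrib_left mult_ac)
  finally have e1: "g $ y - g $ z = 2 * \<mu>" unfolding lhs rr by simp
  have gz': "g $ z = - g $ y" using gyz by (simp add: eq_neg_iff_add_eq_0 add.commute)
  have "2 * g $ y = g $ y - g $ z" unfolding gz' mult_2 by simp
  then have "2 * g $ y = 2 * \<mu>" using e1 by simp
  then have gy: "g $ y = \<mu>" using two by simp
  have gz: "g $ z = - \<mu>" using gz' gy by simp
  have gq: "g = \<mu> *s q"
  proof (subst vec_eq_iff, intro allI)
    fix j
    show "g $ j = (\<mu> *s q) $ j"
    proof (cases "cls j = a")
      case True
      then have "j = y \<or> j = z" using yz by blast
      then show ?thesis using gy gz yz(2) unfolding q_def by (auto simp: ev_comp)
    next
      case False
      then have "j \<noteq> y" "j \<noteq> z" using cy cz by auto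
      then show ?thesis using Ksupp[OF False] unfolding q_def by (simp add: ev_comp)
    qed
  qed
  have mu0: "\<mu> \<noteq> 0" unfolding \<mu>_def using wi .
  define N where "N = mat_smult (inverse (\<mu> * \<mu>)) (K ** dual_idem R x b)"
  have NT: "N \<in> TT" unfolding N_def by (intro T_smult T_mult KT T_E b)
  have "N *v w = inverse (\<mu> * \<mu>) *s (K *v (\<mu> *s r))"
    unfolding N_def mat_smult_mv by (simp add: matrix_vector_mul_assoc[symmetric] Ew)
  also have "\<dots> = (inverse (\<mu> * \<mu>) * (\<mu> * \<mu>)) *s q"
    unfolding mv_smult_right g_def[symmetric] gq by (simp add: vector_smult_assoc)
  also have "inverse (\<mu> * \<mu>) * (\<mu> * \<mu>) = 1" by (rule left_inverse) (simp add: mu0)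
  also have "1 *s q = q" by simp
  finally show "\<exists>N\<in>TT. N *v (M *v (ev y - ev z)) = ev y - ev z"
    using NT unfolding w_def q_def by blast
qed

end


context qs begin

lemma class_cases:
  assumes qt: "\<forall>b\<le>d. kk b \<le> 2" and a: "a \<le> d" and y: "cls y = a"
  shows "{j. cls j = a} = {y} \<or> (\<exists>z. z \<noteq> y \<and> {j. cls j = a} = {y, z})"
proof -
  define C where "C = {j. cls j = a}"
  have yC: "y \<in> C" unfolding C_def using y by simp
  have "card C \<le> 2" using qt a unfolding kk_def C_def by simp
  moreover have "card C \<noteq> 0" using yC by (metis card_0_eq empty_iff finite)
  ultimately have "card C = 1 \<or> card C = 2" by linarith
  then show ?thesis
  proof
    assume "card C = 1"
    then obtain p where "C = {p}" by (metis One_nat_def card_1_singleton_iff)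
    then show ?thesis using yC unfolding C_def by auto
  next
    assume "card C = 2"
    then obtain p1 p2 where C: "C = {p1, p2}" "p1 \<noteq> p2" by (metis card_2_iff)
    show ?thesis
    proof (cases "y = p1")
      case True then show ?thesis using C unfolding C_def by auto
    next
      case False then have "y = p2" using yC C by auto
      then show ?thesis using C unfolding C_def by (intro disjI2 exI[of _ p1]) auto
    qed
  qed
qed

lemma uu_single: "{j. cls j = a} = {y} \<Longrightarrow> uu a = (ev y :: 'f::field^'x)"
  unfolding uu_def ev_def by (auto simp: vec_eq_iff)

lemma uu_pair: "{j. cls j = a} = {y, z} \<Longrightarrow> y \<noteq> z \<Longrightarrow> uu a = (ev y + ev z :: 'f::field^'x)"
  unfolding uu_def ev_def by (auto simp: vec_eq_iff)

lemma ev_split: "(2::'f::field) \<noteq> 0 \<Longrightarrow> ev y = inverse 2 *s ((ev y + ev z) + (ev y - ev z) :: 'f^'x)"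
  by (simp add: vec_eq_iff ev_def)

lemma zero_in_J: "unital_alg A e \<Longrightarrow> 0 \<in> jacobson_radical A"
  unfolding jacobson_radical_def unital_alg_def maximal_left_ideal_def left_ideal_def by auto

lemma span_zero:
  assumes qt: "\<forall>b\<le>d. kk b \<le> 2" and pv: "\<forall>b\<le>d. of_nat (kk b) \<noteq> (0::'f::field)"
    and u0: "\<And>a. a \<le> d \<Longrightarrow> M *v uu a = (0::'f^'x)"
    and q0: "\<And>a y z. a \<le> d \<Longrightarrow> {j. cls j = a} = {y, z} \<Longrightarrow> y \<noteq> z \<Longrightarrow> M *v (ev y - ev z) = 0"
    and y: "cls y = a" "a \<le> d"
  shows "M *v ev y = 0"
proof -
  from class_cases[OF qt y(2) y(1)] show ?thesis
  proof
    assume "{j. cls j = a} = {y}"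
    then show ?thesis using u0[OF y(2)] uu_single by metis
  next
    assume "\<exists>z. z \<noteq> y \<and> {j. cls j = a} = {y, z}"
    then obtain z where z: "z \<noteq> y" "{j. cls j = a} = {y, z}" by blast
    have "kk a = 2" using z unfolding kk_def by simp
    then have two: "(2::'f) \<noteq> 0" using pv y(2) by (metis of_nat_numeral)
    have "ev y = inverse 2 *s (uu a + (ev y - ev z) :: 'f^'x)"
      using ev_split[OF two, of y z] uu_pair[OF z(2)] z(1) by metis
    then have "M *v ev y = inverse 2 *s (M *v (uu a + (ev y - ev z)))"
      by (metis mv_smult_right)
    also have "\<dots> = inverse 2 *s (M *v uu a + M *v (ev y - ev z))" by (simp only: mv_add_right)
    finally have "M *v ev y = inverse 2 *s (M *v uu a + M *v (ev y - ev z))" .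
    then show ?thesis using u0[OF y(2)] q0[OF y(2) z(2)] z(1) by simp
  qed
qed

lemma J_zero_T:
  assumes pv: "\<forall>b\<le>d. of_nat (kk b) \<noteq> (0::'f::field)" and qt: "\<forall>b\<le>d. kk b \<le> 2"
  shows "jacobson_radical (TT :: ('f^'x^'x) set) = {0}"
proof
  show "{0} \<subseteq> jacobson_radical (TT :: ('f^'x^'x) set)" using zero_in_J[OF T_unital] by simp
next
  show "jacobson_radical (TT :: ('f^'x^'x) set) \<subseteq> {0}"
  proof
    fix M :: "'f^'x^'x" assume MJ: "M \<in> jacobson_radical TT"
    have u0: "M *v uu a = 0" if a: "a \<le> d" for a
      by (rule good_vec_ann[OF T_unital _ good_u_T[OF pv a] MJ]) simp
    have q0: "M *v (ev y - ev z) = 0" if a: "a \<le> d" and yz: "{j. cls j = a} = {y, z}" "y \<noteq> z" for a y z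
    proof -
      have "kk a = 2" using yz unfolding kk_def by simp
      then have two: "(2::'f) \<noteq> 0" using pv a by (metis of_nat_numeral)
      show ?thesis by (rule good_vec_ann[OF T_unital _ good_q_T[OF qt two a yz] MJ]) simp
    qed
    have "M *v ev y = 0" for y
      by (rule span_zero[OF qt pv, where M=M and a="cls y" and y=y]) (use u0 q0 cls in auto)
    then show "M \<in> {0}" using mat_eq0_ev by blast
  qed
qed


lemma E_B: "a \<le> d \<Longrightarrow> mat_smult c (dual_idem R x a) \<in> (BB a :: ('f::field^'x^'x) set)"
proof -
  assume a: "a \<le> d"
  have "dual_idem R x a ** mat_smult c (mat 1) ** dual_idem R x a = mat_smult c (dual_idem R x a :: 'f^'x^'x)"
    by (simp add: mat_smult_mult_left mat_smult_mult_right EE)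
  then show ?thesis unfolding BB_def using T_smult[OF T_one, of c] by (metis (mono_tags, lifting) mem_Collect_eq)
qed

lemma good_B:
  assumes a: "a \<le> d" and Es: "dual_idem R x a *v s = s"
    and sc: "\<forall>M\<in>BB a. \<exists>c. M *v s = c *s (s :: 'f::field^'x)"
  shows "\<forall>M\<in>BB a. M *v s \<noteq> 0 \<longrightarrow> (\<exists>N\<in>BB a. N *v (M *v s) = s)"
proof (intro ballI impI)
  fix M :: "'f^'x^'x" assume M: "M \<in> BB a" and nz: "M *v s \<noteq> 0"
  obtain c where c: "M *v s = c *s s" using sc M by blast
  have c0: "c \<noteq> 0" using nz c by auto
  have "mat_smult (inverse c) (dual_idem R x a) *v (M *v s) = (inverse c * c) *s s"
    unfolding c mat_smult_mv mv_smult_right Es by (simp add: vector_smult_assoc)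
  also have "inverse c * c = 1" using c0 by simp
  finally show "\<exists>N\<in>BB a. N *v (M *v s) = s" using E_B[OF a] by (intro bexI[of _ "mat_smult (inverse c) (dual_idem R x a)"]) simp_all
qed

lemma B_supp: "a \<le> d \<Longrightarrow> M \<in> BB a \<Longrightarrow> cls j \<noteq> a \<Longrightarrow> (M *v s) $ j = (0::'f::field)"
proof -
  assume a: "a \<le> d" and M: "M \<in> BB a" and j: "cls j \<noteq> a"
  obtain M' where "M = dual_idem R x a ** M' ** dual_idem R x a" using M unfolding BB_def by blast
  then have "M *v s = dual_idem R x a *v ((M' ** dual_idem R x a) *v s)"
    by (simp add: matrix_vector_mul_assoc matrix_mul_assoc)
  then show ?thesis using j by (simp add: E_mv cls_iff[OF a, symmetric])
qed

lemma B_Eev: "a \<le> d \<Longrightarrow> M \<in> BB a \<Longrightarrow> cls y \<noteq> a \<Longrightarrow> M *v ev y = (0::'f::field^'x)"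
proof -
  assume a: "a \<le> d" and M: "M \<in> BB a" and y: "cls y \<noteq> a"
  obtain M' where "M = dual_idem R x a ** M' ** dual_idem R x a" using M unfolding BB_def by blast
  moreover have "dual_idem R x a *v (ev y :: 'f^'x) = 0"
    using y by (auto simp: vec_eq_iff E_mv ev_comp cls_iff[OF a, symmetric])
  ultimately show ?thesis by (metis matrix_vector_mul_assoc mv_smult_right scalar_mult_eq_scaleR
        vector_smult_lzero mv_zero_left zero_vec_def)
qed

lemma J_zero_B:
  assumes pv: "\<forall>b\<le>d. of_nat (kk b) \<noteq> (0::'f::field)" and qt: "\<forall>b\<le>d. kk b \<le> 2" and a: "a \<le> d"
  shows "jacobson_radical (BB a :: ('f^'x^'x) set) = {0}"
proof
  show "{0} \<subseteq> jacobson_radical (BB a :: ('f^'x^'x) set)" using zero_in_J[OF B_unital[OF a]] by simp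
next
  show "jacobson_radical (BB a :: ('f^'x^'x) set) \<subseteq> {0}"
  proof
    fix M :: "'f^'x^'x" assume MJ: "M \<in> jacobson_radical (BB a)"
    have MB: "M \<in> BB a" using MJ unfolding jacobson_radical_def by blast
    have u0: "M *v uu a = 0"
    proof (rule good_vec_ann[OF B_unital[OF a] E_u[OF a] good_B[OF a E_u[OF a]] MJ], intro ballI)
      fix N :: "'f^'x^'x" assume N: "N \<in> BB a"
      have wP: "inP (N *v uu a)" using T_inv[OF BB_T[OF a N]] u_P by blast
      have "N *v uu a = (N *v uu a) $ rep a *s uu a"
      proof (subst vec_eq_iff, intro allI)
        fix j show "(N *v uu a) $ j = ((N *v uu a) $ rep a *s uu a) $ j"
        proof (cases "cls j = a")
          case True then show ?thesis using wP rep_cls[OF a] unfolding inP_def uu_def by simp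
        next
          case False then show ?thesis using B_supp[OF a N False] unfolding uu_def by simp
        qed
      qed
      then show "\<exists>c. N *v uu a = c *s uu a" by blast
    qed
    have u0': "M *v uu b = 0" if b: "b \<le> d" for b
    proof (cases "b = a")
      case True then show ?thesis using u0 by simp
    next
      case False
      show ?thesis
      proof (subst vec_eq_iff, intro allI)
        fix j
        have "uu b = (\<Sum>y\<in>{y. cls y = b}. ev y :: 'f^'x)"
          by (simp add: vec_eq_iff uu_def ev_def sum_component)
        then have "M *v uu b = (\<Sum>y\<in>{y. cls y = b}. M *v ev y)"
          by (simp add: matrix_vector_mult_def vec_eq_iff sum_distrib_left sum_component)
             (intro allI sum.swap)
        also have "\<dots> = 0" using B_Eev[OF a MB] False by (intro sum.neutral) auto
        finally show "(M *v uu b) $ j = (0::'f^'x) $ j" by simp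
      qed
    qed
    have q0: "M *v (ev y - ev z) = 0" if b: "b \<le> d" and yz: "{j. cls j = b} = {y, z}" "y \<noteq> z" for b y z
    proof (cases "b = a")
      case False
      then have "cls y \<noteq> a" "cls z \<noteq> a" using yz by auto
      then show ?thesis using B_Eev[OF a MB] by (simp add: matrix_vector_mult_diff_distrib)
    next
      case True
      have cy: "cls y = a" and cz: "cls z = a" using yz True by auto
      have Eq: "dual_idem R x a *v (ev y - ev z) = (ev y - ev z :: 'f^'x)"
        by (auto simp: vec_eq_iff E_mv ev_comp cls_iff[OF a, symmetric] cy cz)
      show ?thesis
      proof (rule good_vec_ann[OF B_unital[OF a] Eq good_B[OF a Eq] MJ], intro ballI)
        fix N :: "'f^'x^'x" assume N: "N \<in> BB a"
        have qQ: "inQ (ev y - ev z :: 'f^'x)" by (rule ev_diff_Q) (simp add: cy cz)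
        have wQ: "inQ (N *v (ev y - ev z))" using T_inv[OF BB_T[OF a N]] qQ by blast
        have "(\<Sum>j\<in>{j. cls j = a}. (N *v (ev y - ev z)) $ j) = 0" using wQ a unfolding inQ_def by blast
        then have s0: "(N *v (ev y - ev z)) $ y + (N *v (ev y - ev z)) $ z = 0"
          using yz True by simp
        have "N *v (ev y - ev z) = (N *v (ev y - ev z)) $ y *s (ev y - ev z)"
        proof (subst vec_eq_iff, intro allI)
          fix j show "(N *v (ev y - ev z)) $ j = ((N *v (ev y - ev z)) $ y *s (ev y - ev z)) $ j"
          proof (cases "cls j = a")
            case True
            then have "j = y \<or> j = z" using yz \<open>b = a\<close> by blast
            then show ?thesis using s0 yz(2) by (auto simp: ev_comp eq_neg_iff_add_eq_0 add.commute)
          next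
            case False
            then have "j \<noteq> y" "j \<noteq> z" using cy cz by auto
            then show ?thesis using B_supp[OF a N False] by (simp add: ev_comp)
          qed
        qed
        then show "\<exists>c. N *v (ev y - ev z) = c *s (ev y - ev z)" by blast
      qed
    qed
    have "M *v ev y = 0" for y
      by (rule span_zero[OF qt pv, where M=M and a="cls y" and y=y]) (use u0' q0 cls in auto)
    then show "M \<in> {0}" using mat_eq0_ev by blast
  qed
qed

end

theorem corollary5p9:
  fixes d :: nat and R :: "nat \<Rightarrow> ('x::finite \<times> 'x) set" and x :: 'x
  assumes "is_scheme d R" and "quasi_thin d R"
  defines "T \<equiv> (terwilliger_alg d R x :: ('f::field ^'x^'x) set)"
  shows "(p'_valenced CHAR('f) d R \<longleftrightarrow> semisimple_alg T (mat 1)) \<and>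
         (semisimple_alg T (mat 1) \<longleftrightarrow>
            (\<forall>a\<le>d. semisimple_alg {dual_idem R x a ** M ** dual_idem R x a | M. M \<in> T}
                                   (dual_idem R x a)))"
proof -
  interpret qs d R x by unfold_locales (rule assms(1))
  have qt: "\<forall>b\<le>d. kk b \<le> 2" using assms(2) valency unfolding quasi_thin_def by simp
  have pv_iff: "p'_valenced CHAR('f) d R \<longleftrightarrow> (\<forall>b\<le>d. of_nat (kk b) \<noteq> (0::'f))"
    unfolding p'_valenced_def using valency by (simp add: of_nat_eq_0_iff_char_dvd)
  have BBeq: "\<And>a. {dual_idem R x a ** M ** dual_idem R x a | M. M \<in> T} = BB a"
    unfolding BB_def T_def ..
  show ?thesis
  proof (cases "\<forall>b\<le>d. of_nat (kk b) \<noteq> (0::'f)")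
    case True
    have sT: "semisimple_alg T (mat 1)"
      unfolding semisimple_alg_def T_def using T_unital J_zero_T[OF True qt] by simp
    have sB: "\<forall>a\<le>d. semisimple_alg (BB a :: ('f^'x^'x) set) (dual_idem R x a)"
    proof (intro allI impI)
      fix a assume a: "a \<le> d"
      show "semisimple_alg (BB a :: ('f^'x^'x) set) (dual_idem R x a)"
        unfolding semisimple_alg_def using B_unital[OF a] J_zero_B[OF True qt a] by blast
    qed
    show ?thesis using pv_iff True sT sB BBeq by simp
  next
    case False
    then obtain a where a: "a \<le> d" "of_nat (kk a) = (0::'f)" by blast
    have nT: "\<not> semisimple_alg T (mat 1)" using notp_T[OF a] unfolding T_def by simp
    have nB: "\<not> (\<forall>a\<le>d. semisimple_alg (BB a :: ('f^'x^'x) set) (dual_idem R x a))"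
      using notp_B[OF a] a by blast
    show ?thesis using pv_iff False nT nB BBeq by simp
  qed
qed

end
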